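(* Let $L$ be even and consider spin-1 degrees of freedom on the sites $\boldsymbol r$ of the $D$-dimensional hypercubic lattice $(\mathbb{Z}/L\mathbb{Z})^D$ with periodic boundary conditions. Let $$H^{(x)}=J\sum_{\langle\boldsymbol r,\boldsymbol r'\rangle}(S^x_{\boldsymbol r}S^x_{\boldsymbol r'}+S^y_{\boldsymbol r}S^y_{\boldsymbol r'})+h\sum_{\boldsymbol r}S^z_{\boldsymbol r}+\Delta\sum_{\boldsymbol r}(S^z_{\boldsymbol r})^2,$$ with real $J,h,\Delta$, the first sum over nearest-neighbour pairs, and let $\mathcal{P}^{(x)}=\sum_{\boldsymbol r}(-1)^{r_1+\cdots+r_D}(S^+_{\boldsymbol r})^2$. Let $\ket\Omega=\ket{-\,-\cdots-}$ be the state with $S^z_{\boldsymbol r}=-1$ on every site. Then (i) $H^{(x)}\ket\Omega=(\Delta-h)L^D\ket\Omega$; (ii) $[H^{(x)},\mathcal{P}^{(x)}]\ket\Omega=2h\,\mathcal{P}^{(x)}\ket\Omega$; (iii) $[[H^{(x)},\mathcal{P}^{(x)}],\mathcal{P}^{(x)}]=0$. Consequently $H^{(x)}(\mathcal{P}^{(x)})^n\ket\Omega=\big(h(2n-L^D)+\Delta L^D\big)(\mathcal{P}^{(x)})^n\ket\Omega$ for all $n\ge0$.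
   Context: $S^x,S^y,S^z$ are the spin-1 matrices acting on a site, $S^\pm=S^x\pm iS^y$; the local basis states are labelled $+,0,-$ by their $S^z$ eigenvalue. $\boldsymbol r=(r_1,\dots,r_D)$. *)

theory Defs
  imports Complex_Main
begin

definition sites :: "nat \<Rightarrow> nat \<Rightarrow> nat list set" where
  "sites L D = {r. length r = D \<and> (\<forall>i<D. r ! i < L)}"

definition adjacent :: "nat \<Rightarrow> nat \<Rightarrow> nat list \<Rightarrow> nat list \<Rightarrow> bool" where
  "adjacent L D r r' \<longleftrightarrow> (\<exists>\<mu><D. (\<forall>\<nu><D. \<nu> \<noteq> \<mu> \<longrightarrow> r ! \<nu> = r' ! \<nu>) \<and>
       (r' ! \<mu> = (r ! \<mu> + 1) mod L \<or> r ! \<mu> = (r' ! \<mu> + 1) mod L))"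

text \<open>Basis configurations: an S^z eigenvalue in {-1,0,1} on every site (extensional).\<close>
type_synonym cfg = "nat list \<Rightarrow> int"
type_synonym state = "cfg \<Rightarrow> complex"
type_synonym oper = "state \<Rightarrow> state"

definition configs :: "nat \<Rightarrow> nat \<Rightarrow> cfg set" where
  "configs L D = {\<sigma>. (\<forall>r\<in>sites L D. \<sigma> r \<in> {-1, 0, 1}) \<and> (\<forall>r. r \<notin> sites L D \<longrightarrow> \<sigma> r = 0)}"

text \<open>Single-site spin-1 matrices in the basis +,0,-; entry (m, m') = <m| S |m'>.\<close>
definition Sx :: "int \<Rightarrow> int \<Rightarrow> complex" where
  "Sx m m' = (if m \<in> {-1,0,1} \<and> m' \<in> {-1,0,1} \<and> \<bar>m - m'\<bar> = 1
              then complex_of_real (1 / sqrt 2) else 0)"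

definition Sy :: "int \<Rightarrow> int \<Rightarrow> complex" where
  "Sy m m' = (if m \<in> {-1,0,1} \<and> m' \<in> {-1,0,1} \<and> m = m' + 1
                then - \<i> * complex_of_real (1 / sqrt 2)
              else if m \<in> {-1,0,1} \<and> m' \<in> {-1,0,1} \<and> m' = m + 1
                then \<i> * complex_of_real (1 / sqrt 2)
              else 0)"

definition Sz :: "int \<Rightarrow> int \<Rightarrow> complex" where
  "Sz m m' = (if m = m' \<and> m \<in> {-1,0,1} then of_int m else 0)"

definition Splus :: "int \<Rightarrow> int \<Rightarrow> complex" where
  "Splus m m' = Sx m m' + \<i> * Sy m m'"

definition mat_op :: "nat \<Rightarrow> nat \<Rightarrow> (cfg \<Rightarrow> cfg \<Rightarrow> complex) \<Rightarrow> oper" where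
  "mat_op L D M \<psi> = (\<lambda>\<sigma>. if \<sigma> \<in> configs L D then (\<Sum>\<tau>\<in>configs L D. M \<sigma> \<tau> * \<psi> \<tau>) else 0)"

definition site_op :: "nat \<Rightarrow> nat \<Rightarrow> nat list \<Rightarrow> (int \<Rightarrow> int \<Rightarrow> complex) \<Rightarrow> oper" where
  "site_op L D r s = mat_op L D (\<lambda>\<sigma> \<tau>. s (\<sigma> r) (\<tau> r) * (if \<forall>q. q \<noteq> r \<longrightarrow> \<sigma> q = \<tau> q then 1 else 0))"

text \<open>H^(x). The sum over nearest-neighbour pairs <r,r'> (each unordered pair once) is
  written as half the sum over ordered adjacent pairs.\<close>
definition Hx :: "nat \<Rightarrow> nat \<Rightarrow> real \<Rightarrow> real \<Rightarrow> real \<Rightarrow> oper" where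
  "Hx L D J h Delta \<psi> = (\<lambda>\<sigma>.
      complex_of_real J * (1/2) * (\<Sum>r\<in>sites L D. \<Sum>r'\<in>{r'\<in>sites L D. adjacent L D r r'}.
          site_op L D r Sx (site_op L D r' Sx \<psi>) \<sigma> + site_op L D r Sy (site_op L D r' Sy \<psi>) \<sigma>)
    + complex_of_real h * (\<Sum>r\<in>sites L D. site_op L D r Sz \<psi> \<sigma>)
    + complex_of_real Delta * (\<Sum>r\<in>sites L D. site_op L D r Sz (site_op L D r Sz \<psi>) \<sigma>))"

definition Px :: "nat \<Rightarrow> nat \<Rightarrow> oper" where
  "Px L D \<psi> = (\<lambda>\<sigma>. \<Sum>r\<in>sites L D. (-1) ^ (sum_list r) * site_op L D r Splus (site_op L D r Splus \<psi>) \<sigma>)"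

definition commutator :: "oper \<Rightarrow> oper \<Rightarrow> oper" where
  "commutator A B \<psi> = (\<lambda>\<sigma>. A (B \<psi>) \<sigma> - B (A \<psi>) \<sigma>)"

definition Omega :: "nat \<Rightarrow> nat \<Rightarrow> state" where
  "Omega L D = (\<lambda>\<sigma>. if \<sigma> = (\<lambda>r. if r \<in> sites L D then -1 else 0) then 1 else 0)"

end

theory Submission
  imports Defs
begin


abbreviation "V \<equiv> {-1,0,1::int}"

lemma sites_eq: "sites L D = {xs. set xs \<subseteq> {..<L} \<and> length xs = D}"
  by (auto simp: sites_def in_set_conv_nth) (meson lessThan_iff nth_mem subsetD)

lemma finite_sites: "finite (sites L D)"
  unfolding sites_eq by (rule finite_lists_length_eq) simp

lemma card_sites: "card (sites L D) = L ^ D"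
  unfolding sites_eq by (subst card_lists_length_eq) simp_all

lemma finite_configs: "finite (configs L D)"
proof -
  have "configs L D \<subseteq> {f. \<forall>x. (x \<in> sites L D \<longrightarrow> f x \<in> V) \<and> (x \<notin> sites L D \<longrightarrow> f x = 0)}"
    by (auto simp: configs_def)
  then show ?thesis
    by (rule finite_subset) (rule finite_set_of_finite_funs[OF finite_sites], simp)
qed

lemma upd_configs: "\<sigma> \<in> configs L D \<Longrightarrow> r \<in> sites L D \<Longrightarrow> m \<in> V \<Longrightarrow> \<sigma>(r:=m) \<in> configs L D"
  by (auto simp: configs_def)

lemma site_op_out: "\<sigma> \<notin> configs L D \<Longrightarrow> site_op L D r A \<psi> \<sigma> = 0"
  by (simp add: site_op_def mat_op_def)

lemma site_op_local:
  assumes s: "\<sigma> \<in> configs L D" and r: "r \<in> sites L D"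
  shows "site_op L D r A \<psi> \<sigma> = (\<Sum>m\<in>V. A (\<sigma> r) m * \<psi> (\<sigma>(r:=m)))"
proof -
  let ?G = "(\<lambda>m. \<sigma>(r:=m)) ` V"
  let ?f = "\<lambda>\<tau>. A (\<sigma> r) (\<tau> r) * (if \<forall>q. q \<noteq> r \<longrightarrow> \<sigma> q = \<tau> q then 1 else 0) * \<psi> \<tau>"
  have G: "?G \<subseteq> configs L D" using upd_configs[OF s r] by auto
  have "site_op L D r A \<psi> \<sigma> = (\<Sum>\<tau>\<in>configs L D. ?f \<tau>)"
    using s by (simp add: site_op_def mat_op_def)
  also have "\<dots> = (\<Sum>\<tau>\<in>?G. ?f \<tau>)"
  proof (rule sum.mono_neutral_right[OF finite_configs G], rule ballI)
    fix \<tau> assume t: "\<tau> \<in> configs L D - ?G"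
    show "?f \<tau> = 0"
    proof (cases "\<forall>q. q \<noteq> r \<longrightarrow> \<sigma> q = \<tau> q")
      case True
      have "\<tau> r \<in> V" using t r by (auto simp: configs_def)
      moreover have "\<tau> = \<sigma>(r := \<tau> r)" using True by (auto simp: fun_eq_iff)
      ultimately have "\<tau> \<in> ?G" by blast
      with t show ?thesis by blast
    qed auto
  qed
  also have "\<dots> = (\<Sum>m\<in>V. A (\<sigma> r) m * \<psi> (\<sigma>(r:=m)))"
  proof -
    have inj: "inj_on (\<lambda>m. \<sigma>(r:=m)) V" by (auto simp: inj_on_def fun_eq_iff)
    show ?thesis unfolding sum.reindex[OF inj] comp_def by (rule sum.cong) auto
  qed
  finally show ?thesis .
qed



definition mm :: "(int \<Rightarrow> int \<Rightarrow> complex) \<Rightarrow> (int \<Rightarrow> int \<Rightarrow> complex) \<Rightarrow> int \<Rightarrow> int \<Rightarrow> complex" where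
  "mm A B m m' = (\<Sum>k\<in>V. A m k * B k m')"

lemma site_op_same:
  assumes r: "r \<in> sites L D"
  shows "site_op L D r A (site_op L D r B \<psi>) = site_op L D r (mm A B) \<psi>"
proof (rule ext)
  fix \<sigma> show "site_op L D r A (site_op L D r B \<psi>) \<sigma> = site_op L D r (mm A B) \<psi> \<sigma>"
  proof (cases "\<sigma> \<in> configs L D")
    case True
    then show ?thesis using r
      by (simp add: site_op_local upd_configs mm_def algebra_simps)
  qed (simp add: site_op_out)
qed

lemma site_op_twist:
  assumes r: "r \<in> sites L D" and r': "r' \<in> sites L D" and ne: "r \<noteq> r'"
  shows "site_op L D r A (site_op L D r' B \<psi>) = site_op L D r' B (site_op L D r A \<psi>)"
proof (rule ext)
  fix \<sigma> show "site_op L D r A (site_op L D r' B \<psi>) \<sigma> = site_op L D r' B (site_op L D r A \<psi>) \<sigma>"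
  proof (cases "\<sigma> \<in> configs L D")
    case True
    have tw: "\<And>m n. \<sigma>(r:=m, r':=n) = \<sigma>(r':=n, r:=m)" using ne by (rule fun_upd_twist)
    show ?thesis using r r' ne True
      by (simp add: site_op_local upd_configs tw algebra_simps)
  qed (simp add: site_op_out)
qed

lemma site_op_add: "site_op L D r A (\<lambda>\<sigma>. \<psi> \<sigma> + \<phi> \<sigma>) = (\<lambda>\<sigma>. site_op L D r A \<psi> \<sigma> + site_op L D r A \<phi> \<sigma>)"
  by (simp add: site_op_def mat_op_def fun_eq_iff algebra_simps sum.distrib)

lemma site_op_scale: "site_op L D r A (\<lambda>\<sigma>. c * \<psi> \<sigma>) = (\<lambda>\<sigma>. c * site_op L D r A \<psi> \<sigma>)"
  by (simp add: site_op_def mat_op_def fun_eq_iff algebra_simps sum_distrib_left)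

lemma site_op_mscale: "site_op L D r (\<lambda>m m'. c * A m m') \<psi> = (\<lambda>\<sigma>. c * site_op L D r A \<psi> \<sigma>)"
  by (simp add: site_op_def mat_op_def fun_eq_iff algebra_simps sum_distrib_left)

lemma site_op_mdiff: "site_op L D r (\<lambda>m m'. A m m' - B m m') \<psi> = (\<lambda>\<sigma>. site_op L D r A \<psi> \<sigma> - site_op L D r B \<psi> \<sigma>)"
  by (simp add: site_op_def mat_op_def fun_eq_iff algebra_simps sum_subtractf)

definition lin :: "oper \<Rightarrow> bool" where
  "lin A \<longleftrightarrow> (\<forall>\<psi> \<phi>. A (\<lambda>\<sigma>. \<psi> \<sigma> + \<phi> \<sigma>) = (\<lambda>\<sigma>. A \<psi> \<sigma> + A \<phi> \<sigma>)) \<and>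
     (\<forall>c \<psi>. A (\<lambda>\<sigma>. c * \<psi> \<sigma>) = (\<lambda>\<sigma>. c * A \<psi> \<sigma>))"

lemma lin_add: "lin A \<Longrightarrow> A (\<lambda>\<sigma>. \<psi> \<sigma> + \<phi> \<sigma>) = (\<lambda>\<sigma>. A \<psi> \<sigma> + A \<phi> \<sigma>)"
  by (simp add: lin_def)
lemma lin_scale: "lin A \<Longrightarrow> A (\<lambda>\<sigma>. c * \<psi> \<sigma>) = (\<lambda>\<sigma>. c * A \<psi> \<sigma>)"
  by (simp add: lin_def)
lemma lin_zero: "lin A \<Longrightarrow> A (\<lambda>\<sigma>. 0) = (\<lambda>\<sigma>. 0)"
  using lin_scale[of A 0 "\<lambda>\<sigma>. 0"] by simp
lemma lin_diff: "lin A \<Longrightarrow> A (\<lambda>\<sigma>. \<psi> \<sigma> - \<phi> \<sigma>) = (\<lambda>\<sigma>. A \<psi> \<sigma> - A \<phi> \<sigma>)"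
proof -
  assume l: "lin A"
  have "A (\<lambda>\<sigma>. \<psi> \<sigma> - \<phi> \<sigma>) = A (\<lambda>\<sigma>. \<psi> \<sigma> + (-1) * \<phi> \<sigma>)" by simp
  also have "\<dots> = (\<lambda>\<sigma>. A \<psi> \<sigma> + A (\<lambda>\<sigma>. (-1) * \<phi> \<sigma>) \<sigma>)" by (rule lin_add[OF l])
  also have "\<dots> = (\<lambda>\<sigma>. A \<psi> \<sigma> - A \<phi> \<sigma>)" using lin_scale[OF l, of "-1" \<phi>] by simp
  finally show ?thesis .
qed
lemma lin_sum: "lin A \<Longrightarrow> A (\<lambda>\<sigma>. \<Sum>i\<in>I. f i \<sigma>) = (\<lambda>\<sigma>. \<Sum>i\<in>I. A (f i) \<sigma>)"
proof (induction I rule: infinite_finite_induct)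
  case (infinite I) then show ?case by (simp add: lin_zero)
next
  case empty then show ?case by (simp add: lin_zero)
next
  case (insert x F) then show ?case using lin_add[OF insert.prems, of "f x" "\<lambda>\<sigma>. \<Sum>i\<in>F. f i \<sigma>"] by simp
qed

lemma lin_site_op: "lin (site_op L D r A)"
  by (simp add: lin_def site_op_add site_op_scale)
lemma lin_comp: "lin A \<Longrightarrow> lin B \<Longrightarrow> lin (\<lambda>\<psi>. A (B \<psi>))"
  by (simp add: lin_def)
lemma lin_lc: "lin A \<Longrightarrow> lin B \<Longrightarrow> lin (\<lambda>\<psi> \<sigma>. a * A \<psi> \<sigma> + b * B \<psi> \<sigma>)"
  by (simp add: lin_def algebra_simps)
lemma lin_add_op: "lin A \<Longrightarrow> lin B \<Longrightarrow> lin (\<lambda>\<psi> \<sigma>. A \<psi> \<sigma> + B \<psi> \<sigma>)"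
  by (simp add: lin_def algebra_simps)
lemma lin_lc3: "lin A \<Longrightarrow> lin B \<Longrightarrow> lin E \<Longrightarrow> lin (\<lambda>\<psi> \<sigma>. a * A \<psi> \<sigma> + b * B \<psi> \<sigma> + c * E \<psi> \<sigma>)"
  by (simp add: lin_def algebra_simps)
lemma lin_sumop: "(\<And>i. i \<in> I \<Longrightarrow> lin (T i)) \<Longrightarrow> lin (\<lambda>\<psi> \<sigma>. \<Sum>i\<in>I. c i * T i \<psi> \<sigma>)"
  by (simp add: lin_def algebra_simps sum.distrib sum_distrib_left)
lemma lin_sumop1: "(\<And>i. i \<in> I \<Longrightarrow> lin (T i)) \<Longrightarrow> lin (\<lambda>\<psi> \<sigma>. \<Sum>i\<in>I. T i \<psi> \<sigma>)"
  by (simp add: lin_def algebra_simps sum.distrib sum_distrib_left)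
lemma lin_comm: "lin A \<Longrightarrow> lin B \<Longrightarrow> lin (commutator A B)"
  unfolding lin_def[of "commutator A B"]
  by (simp add: commutator_def fun_eq_iff lin_add lin_scale algebra_simps)
lemma lin_zeroop: "lin (\<lambda>\<psi> \<sigma>. 0)"
  by (simp add: lin_def)

lemma lin_sum_scale: "lin A \<Longrightarrow> A (\<lambda>\<sigma>. \<Sum>i\<in>I. c i * f i \<sigma>) = (\<lambda>\<sigma>. \<Sum>i\<in>I. c i * A (f i) \<sigma>)"
  using lin_sum[of A "\<lambda>i \<sigma>. c i * f i \<sigma>" I] by (simp add: lin_scale)

lemma comm_sum_left: assumes l: "lin C" shows
  "commutator (\<lambda>\<psi> \<sigma>. \<Sum>i\<in>I. c i * T i \<psi> \<sigma>) C = (\<lambda>\<psi> \<sigma>. \<Sum>i\<in>I. c i * commutator (T i) C \<psi> \<sigma>)"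
proof (rule ext, rule ext)
  fix \<psi> \<sigma>
  have "C (\<lambda>\<sigma>. \<Sum>i\<in>I. c i * T i \<psi> \<sigma>) = (\<lambda>\<sigma>. \<Sum>i\<in>I. c i * C (T i \<psi>) \<sigma>)"
    using lin_sum_scale[OF l, of c "\<lambda>i. T i \<psi>" I] by simp
  then show "commutator (\<lambda>\<psi> \<sigma>. \<Sum>i\<in>I. c i * T i \<psi> \<sigma>) C \<psi> \<sigma> = (\<Sum>i\<in>I. c i * commutator (T i) C \<psi> \<sigma>)"
    by (simp add: commutator_def right_diff_distrib sum_subtractf)
qed

lemma comm_sum_left1: assumes l: "lin C" shows
  "commutator (\<lambda>\<psi> \<sigma>. \<Sum>i\<in>I. T i \<psi> \<sigma>) C = (\<lambda>\<psi> \<sigma>. \<Sum>i\<in>I. commutator (T i) C \<psi> \<sigma>)"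
  using comm_sum_left[OF l, of "\<lambda>_. 1" T I] by simp

lemma comm_sum_right: assumes l: "lin A" shows
  "commutator A (\<lambda>\<psi> \<sigma>. \<Sum>i\<in>I. c i * B i \<psi> \<sigma>) = (\<lambda>\<psi> \<sigma>. \<Sum>i\<in>I. c i * commutator A (B i) \<psi> \<sigma>)"
proof (rule ext, rule ext)
  fix \<psi> \<sigma>
  have "A (\<lambda>\<sigma>. \<Sum>i\<in>I. c i * B i \<psi> \<sigma>) = (\<lambda>\<sigma>. \<Sum>i\<in>I. c i * A (B i \<psi>) \<sigma>)"
    using lin_sum_scale[OF l, of c "\<lambda>i. B i \<psi>" I] by simp
  then show "commutator A (\<lambda>\<psi> \<sigma>. \<Sum>i\<in>I. c i * B i \<psi> \<sigma>) \<psi> \<sigma> = (\<Sum>i\<in>I. c i * commutator A (B i) \<psi> \<sigma>)"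
    by (simp add: commutator_def right_diff_distrib sum_subtractf)
qed

lemma comm_lc3_left: assumes l: "lin C" shows
  "commutator (\<lambda>\<psi> \<sigma>. a * A \<psi> \<sigma> + b * B \<psi> \<sigma> + c * E \<psi> \<sigma>) C =
   (\<lambda>\<psi> \<sigma>. a * commutator A C \<psi> \<sigma> + b * commutator B C \<psi> \<sigma> + c * commutator E C \<psi> \<sigma>)"
proof (rule ext, rule ext)
  fix \<psi> \<sigma>
  have "C (\<lambda>\<sigma>. a * A \<psi> \<sigma> + b * B \<psi> \<sigma> + c * E \<psi> \<sigma>) = (\<lambda>\<sigma>. a * C (A \<psi>) \<sigma> + b * C (B \<psi>) \<sigma> + c * C (E \<psi>) \<sigma>)"
    using lin_add[OF l, of "\<lambda>\<sigma>. a * A \<psi> \<sigma> + b * B \<psi> \<sigma>" "\<lambda>\<sigma>. c * E \<psi> \<sigma>"]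
      lin_add[OF l, of "\<lambda>\<sigma>. a * A \<psi> \<sigma>" "\<lambda>\<sigma>. b * B \<psi> \<sigma>"] by (simp add: lin_scale[OF l])
  then show "commutator (\<lambda>\<psi> \<sigma>. a * A \<psi> \<sigma> + b * B \<psi> \<sigma> + c * E \<psi> \<sigma>) C \<psi> \<sigma> =
     a * commutator A C \<psi> \<sigma> + b * commutator B C \<psi> \<sigma> + c * commutator E C \<psi> \<sigma>"
    by (simp add: commutator_def algebra_simps)
qed

lemma comm_zero_left: "lin C \<Longrightarrow> commutator (\<lambda>\<psi> \<sigma>. 0) C = (\<lambda>\<psi> \<sigma>. 0)"
  by (simp add: commutator_def fun_eq_iff lin_zero)



abbreviation "s2 \<equiv> complex_of_real (1 / sqrt 2)"

lemma sqc: "complex_of_real (sqrt 2) * complex_of_real (sqrt 2) = 2"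
  by (simp flip: of_real_mult)

lemma s2_sq: "s2 * s2 = 1/2"
  by (simp add: sqc)

definition P1 :: "int \<Rightarrow> int \<Rightarrow> complex" where "P1 = mm Splus Splus"
definition KX :: "int \<Rightarrow> int \<Rightarrow> complex" where "KX = (\<lambda>m m'. mm Sx P1 m m' - mm P1 Sx m m')"
definition KY :: "int \<Rightarrow> int \<Rightarrow> complex" where "KY = (\<lambda>m m'. mm Sy P1 m m' - mm P1 Sy m m')"

lemma Splus_val: "Splus m m' = (if m \<in> V \<and> m' \<in> V \<and> m = m' + 1 then 2 * s2 else 0)"
  by (auto simp: Splus_def Sx_def Sy_def)

lemma P1_val: "P1 m m' = (if m = 1 \<and> m' = -1 then 2 else 0)"
  by (auto simp: P1_def mm_def Splus_val sqc)

lemma KX_val: "KX m m' = (if m = 0 \<and> m' = -1 then 2 * s2 else if m = 1 \<and> m' = 0 then - 2 * s2 else 0)"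
  by (auto simp: KX_def mm_def P1_val Sx_def)

lemma KY_val: "KY m m' = \<i> * KX m m'"
  by (auto simp: KY_def KX_val mm_def P1_val Sy_def)

lemma I1: "(\<lambda>m m'. mm Sz P1 m m' - mm P1 Sz m m') = (\<lambda>m m'. 2 * P1 m m')"
  by (auto simp: fun_eq_iff mm_def P1_val Sz_def)

lemma I2: "mm (mm Sz Sz) P1 = mm P1 (mm Sz Sz)"
  by (auto simp: fun_eq_iff mm_def P1_val Sz_def)

lemma I3: "mm KX P1 = mm P1 KX"
  by (auto simp: fun_eq_iff mm_def P1_val KX_val)

lemma I4: "KY = (\<lambda>m m'. \<i> * KX m m')"
  by (simp add: fun_eq_iff KY_val)



definition Pq :: "nat \<Rightarrow> nat \<Rightarrow> nat list \<Rightarrow> oper" where "Pq L D q = site_op L D q P1"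
definition sg :: "nat list \<Rightarrow> complex" where "sg q = (-1) ^ sum_list q"
definition Bop :: "nat \<Rightarrow> nat \<Rightarrow> nat list \<Rightarrow> nat list \<Rightarrow> oper" where
  "Bop L D r r' = (\<lambda>\<psi> \<sigma>. site_op L D r Sx (site_op L D r' Sx \<psi>) \<sigma> + site_op L D r Sy (site_op L D r' Sy \<psi>) \<sigma>)"
definition W :: "nat \<Rightarrow> nat \<Rightarrow> nat list \<Rightarrow> nat list \<Rightarrow> oper" where
  "W L D r r' = (\<lambda>\<psi>. site_op L D r KX (site_op L D r' Splus \<psi>))"

lemma Px_eq: "Px L D = (\<lambda>\<psi> \<sigma>. \<Sum>q\<in>sites L D. sg q * Pq L D q \<psi> \<sigma>)"
  unfolding Px_def Pq_def sg_def
  by (intro ext sum.cong refl) (simp add: site_op_same P1_def)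

lemma lin_Pq: "lin (Pq L D q)" by (simp add: Pq_def lin_site_op)
lemma lin_Px: "lin (Px L D)" unfolding Px_eq by (rule lin_sumop) (rule lin_Pq)
lemma lin_Bop: "lin (Bop L D r r')" unfolding Bop_def
  by (rule lin_add_op; rule lin_comp; rule lin_site_op)
lemma lin_W: "lin (W L D r r')" unfolding W_def by (rule lin_comp; rule lin_site_op)

lemma site_op_madd: "site_op L D r (\<lambda>m m'. A m m' + B m m') \<psi> = (\<lambda>\<sigma>. site_op L D r A \<psi> \<sigma> + site_op L D r B \<psi> \<sigma>)"
  by (simp add: site_op_def mat_op_def fun_eq_iff algebra_simps sum.distrib)

lemma comm_scale_left: "lin C \<Longrightarrow> commutator (\<lambda>\<psi> \<sigma>. c * A \<psi> \<sigma>) C = (\<lambda>\<psi> \<sigma>. c * commutator A C \<psi> \<sigma>)"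
  by (simp add: commutator_def fun_eq_iff lin_scale right_diff_distrib)

lemma comm_Pq: "q \<in> sites L D \<Longrightarrow> q' \<in> sites L D \<Longrightarrow> commutator (Pq L D q) (Pq L D q') = (\<lambda>\<psi> \<sigma>. 0)"
  by (cases "q = q'") (simp_all add: commutator_def fun_eq_iff Pq_def site_op_twist)

lemma cZ: assumes r: "r \<in> sites L D" and q: "q \<in> sites L D"
  shows "commutator (site_op L D r Sz) (Pq L D q) = (if q = r then (\<lambda>\<psi> \<sigma>. 2 * Pq L D q \<psi> \<sigma>) else (\<lambda>\<psi> \<sigma>. 0))"
proof (cases "q = r")
  case True
  have "commutator (site_op L D r Sz) (Pq L D q) = (\<lambda>\<psi> \<sigma>. site_op L D r (\<lambda>m m'. mm Sz P1 m m' - mm P1 Sz m m') \<psi> \<sigma>)"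
    using True r by (simp add: commutator_def fun_eq_iff Pq_def site_op_same site_op_mdiff)
  also have "\<dots> = (\<lambda>\<psi> \<sigma>. 2 * Pq L D q \<psi> \<sigma>)"
    unfolding I1 site_op_mscale using True by (simp add: Pq_def)
  finally show ?thesis using True by simp
next
  case False then show ?thesis using r q by (simp add: commutator_def fun_eq_iff Pq_def site_op_twist)
qed

lemma cZ2: assumes r: "r \<in> sites L D" and q: "q \<in> sites L D"
  shows "commutator (\<lambda>\<psi>. site_op L D r Sz (site_op L D r Sz \<psi>)) (Pq L D q) = (\<lambda>\<psi> \<sigma>. 0)"
proof (cases "q = r")
  case True
  then show ?thesis using r by (simp add: commutator_def fun_eq_iff Pq_def site_op_same I2)
next
  case False then show ?thesis using r q by (simp add: commutator_def fun_eq_iff Pq_def site_op_twist)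
qed

lemma I5: "mm Splus P1 = mm P1 Splus"
  by (auto simp: fun_eq_iff mm_def P1_val Splus_val)

lemma cW: assumes r: "r \<in> sites L D" and r': "r' \<in> sites L D" and ne: "r \<noteq> r'" and q: "q \<in> sites L D"
  shows "commutator (W L D r r') (Pq L D q) = (\<lambda>\<psi> \<sigma>. 0)"
proof -
  consider "q = r" | "q = r'" | "q \<noteq> r \<and> q \<noteq> r'" by blast
  then show ?thesis
  proof cases
    case 1 then show ?thesis using r r' ne
      by (simp add: commutator_def fun_eq_iff Pq_def W_def site_op_same site_op_twist[of r' L D r] I3)
  next
    case 2 then show ?thesis using r r' ne
      by (simp add: commutator_def fun_eq_iff Pq_def W_def site_op_same site_op_twist[of r' L D r] I5)
  next
    case 3
    have tw1: "\<And>A B \<phi>. site_op L D r A (site_op L D q B \<phi>) = site_op L D q B (site_op L D r A \<phi>)"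
      using site_op_twist[OF r q] 3 by metis
    have tw2: "\<And>A B \<phi>. site_op L D r' A (site_op L D q B \<phi>) = site_op L D q B (site_op L D r' A \<phi>)"
      using site_op_twist[OF r' q] 3 by metis
    show ?thesis by (simp add: commutator_def fun_eq_iff Pq_def W_def tw1 tw2)
  qed
qed

lemma Bop_W: assumes r: "r \<in> sites L D" and r': "r' \<in> sites L D" and ne: "r \<noteq> r'"
  shows "commutator (Bop L D r r') (Pq L D r) = W L D r r'"
proof (rule ext, rule ext)
  fix \<psi> \<sigma>
  have tw: "\<And>A B \<phi>. site_op L D r' A (site_op L D r B \<phi>) = site_op L D r B (site_op L D r' A \<phi>)"
    using site_op_twist[OF r' r] ne by metis
  have "commutator (Bop L D r r') (Pq L D r) \<psi> \<sigma> =
     site_op L D r KX (site_op L D r' Sx \<psi>) \<sigma> + site_op L D r KY (site_op L D r' Sy \<psi>) \<sigma>"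
    unfolding KX_def KY_def site_op_mdiff
    by (simp add: commutator_def Bop_def Pq_def site_op_add tw site_op_same r)
  also have "\<dots> = site_op L D r KX (\<lambda>\<sigma>. site_op L D r' Sx \<psi> \<sigma> + \<i> * site_op L D r' Sy \<psi> \<sigma>) \<sigma>"
    unfolding I4 site_op_mscale site_op_add site_op_scale by simp
  also have "(\<lambda>\<sigma>. site_op L D r' Sx \<psi> \<sigma> + \<i> * site_op L D r' Sy \<psi> \<sigma>) = site_op L D r' Splus \<psi>"
    unfolding Splus_def site_op_madd site_op_mscale ..
  finally show "commutator (Bop L D r r') (Pq L D r) \<psi> \<sigma> = W L D r r' \<psi> \<sigma>" by (simp add: W_def)
qed

lemma Bop_sym: assumes r: "r \<in> sites L D" and r': "r' \<in> sites L D" and ne: "r \<noteq> r'"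
  shows "Bop L D r r' = Bop L D r' r"
  using r r' ne by (simp add: Bop_def site_op_twist fun_eq_iff)

lemma cB: assumes r: "r \<in> sites L D" and r': "r' \<in> sites L D" and ne: "r \<noteq> r'" and q: "q \<in> sites L D"
  shows "commutator (Bop L D r r') (Pq L D q) \<psi> \<sigma> =
     (if q = r then W L D r r' \<psi> \<sigma> else 0) + (if q = r' then W L D r' r \<psi> \<sigma> else 0)"
proof -
  consider "q = r" | "q = r'" | "q \<noteq> r \<and> q \<noteq> r'" by blast
  then show ?thesis
  proof cases
    case 1 then show ?thesis using Bop_W[OF r r' ne] ne by simp
  next
    case 2 then show ?thesis using Bop_W[OF r' r] Bop_sym[OF r r' ne] ne by simp
  next
    case 3
    have tw1: "\<And>A B \<phi>. site_op L D r A (site_op L D q B \<phi>) = site_op L D q B (site_op L D r A \<phi>)"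
      using site_op_twist[OF r q] 3 by metis
    have tw2: "\<And>A B \<phi>. site_op L D r' A (site_op L D q B \<phi>) = site_op L D q B (site_op L D r' A \<phi>)"
      using site_op_twist[OF r' q] 3 by metis
    show ?thesis using 3 by (simp add: commutator_def Bop_def Pq_def tw1 tw2 site_op_add)
  qed
qed



definition good :: "nat \<Rightarrow> nat \<Rightarrow> oper \<Rightarrow> bool" where
  "good L D A \<longleftrightarrow> lin A \<and> (\<forall>q\<in>sites L D. \<forall>q'\<in>sites L D.
      commutator (commutator A (Pq L D q)) (Pq L D q') = (\<lambda>\<psi> \<sigma>. 0))"

lemma good_sum: assumes "\<And>i. i \<in> I \<Longrightarrow> good L D (T i)"
  shows "good L D (\<lambda>\<psi> \<sigma>. \<Sum>i\<in>I. T i \<psi> \<sigma>)"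
proof -
  have l: "lin (\<lambda>\<psi> \<sigma>. \<Sum>i\<in>I. T i \<psi> \<sigma>)" by (rule lin_sumop1) (use assms in \<open>simp add: good_def\<close>)
  have "commutator (commutator (\<lambda>\<psi> \<sigma>. \<Sum>i\<in>I. T i \<psi> \<sigma>) (Pq L D q)) (Pq L D q') = (\<lambda>\<psi> \<sigma>. 0)"
    if q: "q \<in> sites L D" and q': "q' \<in> sites L D" for q q'
  proof -
    have "commutator (commutator (\<lambda>\<psi> \<sigma>. \<Sum>i\<in>I. T i \<psi> \<sigma>) (Pq L D q)) (Pq L D q') =
      (\<lambda>\<psi> \<sigma>. \<Sum>i\<in>I. commutator (commutator (T i) (Pq L D q)) (Pq L D q') \<psi> \<sigma>)"
      by (simp add: comm_sum_left1 lin_Pq)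
    also have "\<dots> = (\<lambda>\<psi> \<sigma>. 0)" using assms q q' by (simp add: good_def)
    finally show ?thesis .
  qed
  then show ?thesis using l by (simp add: good_def)
qed

lemma good_lc3: assumes "good L D A" "good L D B" "good L D E"
  shows "good L D (\<lambda>\<psi> \<sigma>. a * A \<psi> \<sigma> + b * B \<psi> \<sigma> + c * E \<psi> \<sigma>)"
  using assms by (simp add: good_def lin_lc3 comm_lc3_left lin_Pq)

lemma good_Z: assumes r: "r \<in> sites L D" shows "good L D (site_op L D r Sz)"
  unfolding good_def
proof (intro conjI ballI)
  fix q q' assume q: "q \<in> sites L D" and q': "q' \<in> sites L D"
  show "commutator (commutator (site_op L D r Sz) (Pq L D q)) (Pq L D q') = (\<lambda>\<psi> \<sigma>. 0)"
    using cZ[OF r q] q q' by (cases "q = r") (simp_all add: comm_scale_left lin_Pq comm_Pq comm_zero_left)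
qed (rule lin_site_op)

lemma good_Z2: assumes r: "r \<in> sites L D" shows "good L D (\<lambda>\<psi>. site_op L D r Sz (site_op L D r Sz \<psi>))"
  unfolding good_def
proof (intro conjI ballI)
  fix q q' assume q: "q \<in> sites L D" and q': "q' \<in> sites L D"
  show "commutator (commutator (\<lambda>\<psi>. site_op L D r Sz (site_op L D r Sz \<psi>)) (Pq L D q)) (Pq L D q') = (\<lambda>\<psi> \<sigma>. 0)"
    using cZ2[OF r q] by (simp add: lin_Pq comm_zero_left)
qed (rule lin_comp; rule lin_site_op)

lemma good_B: assumes r: "r \<in> sites L D" and r': "r' \<in> sites L D" and ne: "r \<noteq> r'"
  shows "good L D (Bop L D r r')"
  unfolding good_def
proof (intro conjI ballI)
  fix q q' assume q: "q \<in> sites L D" and q': "q' \<in> sites L D"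
  have e: "commutator (Bop L D r r') (Pq L D q) = (if q = r then W L D r r' else if q = r' then W L D r' r else (\<lambda>\<psi> \<sigma>. 0))"
    using cB[OF r r' ne q] ne by (auto simp: fun_eq_iff)
  show "commutator (commutator (Bop L D r r') (Pq L D q)) (Pq L D q') = (\<lambda>\<psi> \<sigma>. 0)"
    unfolding e using cW[OF r r' ne q'] cW[OF r' r _ q'] ne by (simp add: lin_Pq comm_zero_left)
qed (rule lin_Bop)

lemma mod_ne: "x < L \<Longrightarrow> 2 \<le> L \<Longrightarrow> (x + 1) mod L \<noteq> (x::nat)"
  by (cases "x + 1 < L") (auto simp: mod_if)

lemma adjacent_ne: assumes L: "even L" "L > 0" and a: "adjacent L D r r'" and r: "r \<in> sites L D"
  shows "r \<noteq> r'"
proof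
  assume e: "r = r'"
  from a obtain \<mu> where \<mu>: "\<mu> < D" "r' ! \<mu> = (r ! \<mu> + 1) mod L \<or> r ! \<mu> = (r' ! \<mu> + 1) mod L"
    by (auto simp: adjacent_def)
  have "r ! \<mu> < L" using r \<mu> by (simp add: sites_def)
  moreover have "2 \<le> L" using L by presburger
  ultimately show False using mod_ne[of "r ! \<mu>" L] \<mu> e by auto
qed

definition XY :: "nat \<Rightarrow> nat \<Rightarrow> oper" where
  "XY L D = (\<lambda>\<psi> \<sigma>. \<Sum>r\<in>sites L D. \<Sum>r'\<in>{r'\<in>sites L D. adjacent L D r r'}. Bop L D r r' \<psi> \<sigma>)"
definition ZZ :: "nat \<Rightarrow> nat \<Rightarrow> oper" where
  "ZZ L D = (\<lambda>\<psi> \<sigma>. \<Sum>r\<in>sites L D. site_op L D r Sz \<psi> \<sigma>)"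
definition ZZ2 :: "nat \<Rightarrow> nat \<Rightarrow> oper" where
  "ZZ2 L D = (\<lambda>\<psi> \<sigma>. \<Sum>r\<in>sites L D. site_op L D r Sz (site_op L D r Sz \<psi>) \<sigma>)"

lemma Hx_eq: "Hx L D J h Delta = (\<lambda>\<psi> \<sigma>. (complex_of_real J * (1/2)) * XY L D \<psi> \<sigma>
    + complex_of_real h * ZZ L D \<psi> \<sigma> + complex_of_real Delta * ZZ2 L D \<psi> \<sigma>)"
  by (simp add: Hx_def XY_def ZZ_def ZZ2_def Bop_def fun_eq_iff)

lemma good_H: assumes L: "even L" "L > 0" shows "good L D (Hx L D J h Delta)"
  unfolding Hx_eq
proof (rule good_lc3)
  show "good L D (XY L D)" unfolding XY_def
    by (intro good_sum good_B) (auto dest: adjacent_ne[OF L])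
  show "good L D (ZZ L D)" unfolding ZZ_def
    by (intro good_sum good_Z)
  show "good L D (ZZ2 L D)" unfolding ZZ2_def
    by (intro good_sum good_Z2)
qed

lemma dc_zero: assumes g: "good L D A"
  shows "commutator (commutator A (Px L D)) (Px L D) = (\<lambda>\<psi> \<sigma>. 0)"
proof -
  have lA: "lin A" using g by (simp add: good_def)
  have lP: "lin (\<lambda>\<psi> \<sigma>. \<Sum>q\<in>sites L D. sg q * Pq L D q \<psi> \<sigma>)" by (rule lin_sumop) (rule lin_Pq)
  have "commutator (commutator A (Px L D)) (Px L D) =
     commutator (\<lambda>\<psi> \<sigma>. \<Sum>q\<in>sites L D. sg q * commutator A (Pq L D q) \<psi> \<sigma>) (\<lambda>\<psi> \<sigma>. \<Sum>q\<in>sites L D. sg q * Pq L D q \<psi> \<sigma>)"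
    unfolding Px_eq comm_sum_right[OF lA] ..
  also have "\<dots> = (\<lambda>\<psi> \<sigma>. \<Sum>q\<in>sites L D. sg q * commutator (commutator A (Pq L D q)) (\<lambda>\<psi> \<sigma>. \<Sum>q\<in>sites L D. sg q * Pq L D q \<psi> \<sigma>) \<psi> \<sigma>)"
    unfolding comm_sum_left[OF lP] ..
  also have "\<dots> = (\<lambda>\<psi> \<sigma>. \<Sum>q\<in>sites L D. sg q * (\<Sum>q'\<in>sites L D. sg q' * commutator (commutator A (Pq L D q)) (Pq L D q') \<psi> \<sigma>))"
    by (simp add: comm_sum_right[OF lin_comm[OF lA lin_Pq]])
  also have "\<dots> = (\<lambda>\<psi> \<sigma>. 0)" using g by (simp add: good_def)
  finally show ?thesis .
qed



definition om :: "nat \<Rightarrow> nat \<Rightarrow> cfg" where "om L D = (\<lambda>r. if r \<in> sites L D then -1 else 0)"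
definition eb :: "cfg \<Rightarrow> state" where "eb \<tau> = (\<lambda>\<sigma>. if \<sigma> = \<tau> then 1 else 0)"

lemma Omega_eq: "Omega L D = eb (om L D)" by (simp add: Omega_def eb_def om_def)
lemma om_conf: "om L D \<in> configs L D" by (simp add: om_def configs_def)
lemma om_at: "r \<in> sites L D \<Longrightarrow> om L D r = -1" by (simp add: om_def)

lemma site_op_basis:
  assumes t: "\<tau> \<in> configs L D" and r: "r \<in> sites L D"
  shows "site_op L D r A (eb \<tau>) = (\<lambda>\<sigma>. \<Sum>m\<in>V. A m (\<tau> r) * eb (\<tau>(r:=m)) \<sigma>)"
proof (rule ext)
  fix \<sigma>
  show "site_op L D r A (eb \<tau>) \<sigma> = (\<Sum>m\<in>V. A m (\<tau> r) * eb (\<tau>(r:=m)) \<sigma>)"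
  proof (cases "\<sigma> \<in> configs L D")
    case False
    have "\<And>m. m \<in> V \<Longrightarrow> \<tau>(r:=m) \<noteq> \<sigma>" using upd_configs[OF t r] False by blast
    then have "(\<Sum>m\<in>V. A m (\<tau> r) * eb (\<tau>(r:=m)) \<sigma>) = 0"
      by (intro sum.neutral ballI) (auto simp: eb_def)
    then show ?thesis using False by (simp add: site_op_out)
  next
    case True
    have tv: "\<tau> r \<in> V" and sv: "\<sigma> r \<in> V" using t True r by (auto simp: configs_def)
    show ?thesis
    proof (cases "\<forall>q. q \<noteq> r \<longrightarrow> \<sigma> q = \<tau> q")
      case agree: True
      have e1: "\<And>m. (\<sigma>(r:=m) = \<tau>) \<longleftrightarrow> m = \<tau> r" using agree by (auto simp: fun_eq_iff)
      have e2: "\<And>m. (\<sigma> = \<tau>(r:=m)) \<longleftrightarrow> m = \<sigma> r" using agree by (auto simp: fun_eq_iff)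
      have "site_op L D r A (eb \<tau>) \<sigma> = (\<Sum>m\<in>V. if m = \<tau> r then A (\<sigma> r) (\<tau> r) else 0)"
        using True r by (simp add: site_op_local eb_def e1 if_distrib cong: if_cong)
      also have "\<dots> = A (\<sigma> r) (\<tau> r)" using tv by (subst sum.delta) auto
      also have "\<dots> = (\<Sum>m\<in>V. if m = \<sigma> r then A m (\<tau> r) else 0)" using sv by (subst sum.delta) auto
      also have "\<dots> = (\<Sum>m\<in>V. A m (\<tau> r) * eb (\<tau>(r:=m)) \<sigma>)"
        by (rule sum.cong) (auto simp: eb_def e2)
      finally show ?thesis .
    next
      case False
      then obtain q where q: "q \<noteq> r" "\<sigma> q \<noteq> \<tau> q" by blast
      have "\<And>m. \<sigma>(r:=m) \<noteq> \<tau>" "\<And>m. \<sigma> \<noteq> \<tau>(r:=m)" using q by (auto simp: fun_eq_iff)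
      then show ?thesis using True r by (simp add: site_op_local eb_def)
    qed
  qed
qed



lemma om_upd_conf: "r \<in> sites L D \<Longrightarrow> (om L D)(r:=0) \<in> configs L D"
  by (rule upd_configs[OF om_conf]) auto

lemma Z_Om: assumes r: "r \<in> sites L D"
  shows "site_op L D r Sz (eb (om L D)) = (\<lambda>\<sigma>. - eb (om L D) \<sigma>)"
proof -
  have "(om L D)(r := -1) = om L D" using om_at[OF r] by auto
  then show ?thesis using r by (simp add: site_op_basis om_conf om_at Sz_def)
qed

lemma Z2_Om: assumes r: "r \<in> sites L D"
  shows "site_op L D r Sz (site_op L D r Sz (eb (om L D))) = eb (om L D)"
  using r by (simp add: Z_Om site_op_scale[of L D r Sz "-1", simplified])

lemma B_Om: assumes r: "r \<in> sites L D" and r': "r' \<in> sites L D" and ne: "r \<noteq> r'"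
  shows "Bop L D r r' (eb (om L D)) = (\<lambda>\<sigma>. 0)"
proof -
  have x1: "site_op L D r' Sx (eb (om L D)) = (\<lambda>\<sigma>. s2 * eb ((om L D)(r':=0)) \<sigma>)"
    using r' by (simp add: site_op_basis om_conf om_at Sx_def)
  have y1: "site_op L D r' Sy (eb (om L D)) = (\<lambda>\<sigma>. (- \<i> * s2) * eb ((om L D)(r':=0)) \<sigma>)"
    using r' by (simp add: site_op_basis om_conf om_at Sy_def)
  have ro: "((om L D)(r':=0)) r = -1" using ne r by (simp add: om_at)
  have x2: "site_op L D r Sx (eb ((om L D)(r':=0))) = (\<lambda>\<sigma>. s2 * eb ((om L D)(r':=0, r:=0)) \<sigma>)"
    using r r' ne by (simp add: site_op_basis om_upd_conf om_at Sx_def)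
  have y2: "site_op L D r Sy (eb ((om L D)(r':=0))) = (\<lambda>\<sigma>. (- \<i> * s2) * eb ((om L D)(r':=0, r:=0)) \<sigma>)"
    using r r' ne by (simp add: site_op_basis om_upd_conf om_at Sy_def)
  show ?thesis
    unfolding Bop_def x1 y1 site_op_scale x2 y2
    by (simp add: fun_eq_iff algebra_simps sqc)
qed

lemma W_Om: assumes r: "r \<in> sites L D" and r': "r' \<in> sites L D" and ne: "r \<noteq> r'"
  shows "W L D r r' (eb (om L D)) = (\<lambda>\<sigma>. 2 * eb ((om L D)(r':=0, r:=0)) \<sigma>)"
proof -
  have x1: "site_op L D r' Splus (eb (om L D)) = (\<lambda>\<sigma>. (2 * s2) * eb ((om L D)(r':=0)) \<sigma>)"
    using r' by (simp add: site_op_basis om_conf om_at Splus_val)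
  have ro: "((om L D)(r':=0)) r = -1" using ne r by (simp add: om_at)
  have x2: "site_op L D r KX (eb ((om L D)(r':=0))) = (\<lambda>\<sigma>. (2 * s2) * eb ((om L D)(r':=0, r:=0)) \<sigma>)"
    using r r' ne by (simp add: site_op_basis om_upd_conf om_at KX_val)
  show ?thesis
    unfolding W_def x1 site_op_scale x2
    by (simp add: fun_eq_iff algebra_simps sqc)
qed



lemma parity_step: "even L \<Longrightarrow> x < L \<Longrightarrow> (even ((x + 1) mod L) \<longleftrightarrow> odd (x::nat))"
proof (cases "x + 1 < L")
  case True then show ?thesis by simp
next
  case False
  assume "even L" "x < L"
  then have "x + 1 = L" using False by simp
  then show ?thesis using \<open>even L\<close> by auto
qed

lemma adj_sg: assumes L: "even L" and r: "r \<in> sites L D" and r': "r' \<in> sites L D"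
  and a: "adjacent L D r r'"
  shows "sg r' = - sg r"
proof -
  from a obtain \<mu> where \<mu>: "\<mu> < D" "\<forall>\<nu><D. \<nu> \<noteq> \<mu> \<longrightarrow> r ! \<nu> = r' ! \<nu>"
    "r' ! \<mu> = (r ! \<mu> + 1) mod L \<or> r ! \<mu> = (r' ! \<mu> + 1) mod L"
    by (auto simp: adjacent_def)
  let ?R = "{..<D} - {\<mu>}"
  have sl: "sum_list x = x ! \<mu> + (\<Sum>i\<in>?R. x ! i)" if x: "x \<in> sites L D" for x
  proof -
    have "length x = D" using x by (simp add: sites_def)
    then have "sum_list x = (\<Sum>i\<in>{..<D}. x ! i)" by (simp add: sum_list_sum_nth atLeast0LessThan)
    also have "\<dots> = x ! \<mu> + (\<Sum>i\<in>?R. x ! i)" using \<mu>(1) by (simp add: sum.remove)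
    finally show ?thesis .
  qed
  have rest: "(\<Sum>i\<in>?R. r ! i) = (\<Sum>i\<in>?R. r' ! i)" using \<mu>(2) by (intro sum.cong) auto
  have lt: "r ! \<mu> < L" "r' ! \<mu> < L" using r r' \<mu>(1) by (auto simp: sites_def)
  have p: "odd (r ! \<mu>) \<longleftrightarrow> even (r' ! \<mu>)"
    using \<mu>(3) parity_step[OF L lt(1)] parity_step[OF L lt(2)] by auto
  have "odd (sum_list r) \<longleftrightarrow> even (sum_list r')"
    unfolding sl[OF r] sl[OF r'] rest using p by auto
  then show ?thesis by (auto simp: sg_def minus_one_power_iff)
qed

lemma cXY: assumes L: "even L" "L > 0" and q: "q \<in> sites L D"
  shows "commutator (XY L D) (Pq L D q) \<psi> \<sigma> =
    (\<Sum>r\<in>sites L D. \<Sum>r'\<in>{r'\<in>sites L D. adjacent L D r r'}.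
       (if q = r then W L D r r' \<psi> \<sigma> else 0) + (if q = r' then W L D r' r \<psi> \<sigma> else 0))"
  unfolding XY_def comm_sum_left1[OF lin_Pq]
  by (intro sum.cong refl) (rule cB[OF _ _ _ q]; auto dest: adjacent_ne[OF L])

lemma cZZ: assumes q: "q \<in> sites L D"
  shows "commutator (ZZ L D) (Pq L D q) \<psi> \<sigma> = 2 * Pq L D q \<psi> \<sigma>"
proof -
  have "commutator (ZZ L D) (Pq L D q) \<psi> \<sigma> = (\<Sum>r\<in>sites L D. if q = r then 2 * Pq L D q \<psi> \<sigma> else 0)"
    unfolding ZZ_def comm_sum_left1[OF lin_Pq] by (intro sum.cong refl) (simp add: cZ q)
  also have "\<dots> = 2 * Pq L D q \<psi> \<sigma>" using q by (simp add: sum.delta' finite_sites)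
  finally show ?thesis .
qed

lemma cZZ2: assumes q: "q \<in> sites L D"
  shows "commutator (ZZ2 L D) (Pq L D q) \<psi> \<sigma> = 0"
  unfolding ZZ2_def comm_sum_left1[OF lin_Pq] by (simp add: cZ2 q)

lemma part1: assumes L: "even L" "L > 0"
  shows "Hx L D J h Delta (Omega L D) = (\<lambda>\<sigma>. complex_of_real ((Delta - h) * real L ^ D) * Omega L D \<sigma>)"
proof (rule ext)
  fix \<sigma>
  have xy: "XY L D (eb (om L D)) \<sigma> = 0"
    unfolding XY_def
    by (intro sum.neutral ballI) (auto simp: B_Om dest: adjacent_ne[OF L])
  have zz: "ZZ L D (eb (om L D)) \<sigma> = - of_nat (card (sites L D)) * eb (om L D) \<sigma>"
    unfolding ZZ_def by (simp add: Z_Om)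
  have zz2: "ZZ2 L D (eb (om L D)) \<sigma> = of_nat (card (sites L D)) * eb (om L D) \<sigma>"
    unfolding ZZ2_def by (simp add: Z2_Om)
  show "Hx L D J h Delta (Omega L D) \<sigma> = complex_of_real ((Delta - h) * real L ^ D) * Omega L D \<sigma>"
    unfolding Hx_eq Omega_eq xy zz zz2 card_sites by (simp add: algebra_simps)
qed



lemma swap3: "(\<Sum>q\<in>S. f q * (\<Sum>r\<in>A. \<Sum>r'\<in>B r. F q r r')) = (\<Sum>r\<in>A. \<Sum>r'\<in>B r. \<Sum>q\<in>S. f q * F q r r')"
  for F :: "_ \<Rightarrow> _ \<Rightarrow> _ \<Rightarrow> complex"
proof -
  have "(\<Sum>q\<in>S. f q * (\<Sum>r\<in>A. \<Sum>r'\<in>B r. F q r r')) = (\<Sum>q\<in>S. \<Sum>r\<in>A. \<Sum>r'\<in>B r. f q * F q r r')"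
    by (simp add: sum_distrib_left)
  also have "\<dots> = (\<Sum>r\<in>A. \<Sum>q\<in>S. \<Sum>r'\<in>B r. f q * F q r r')" by (rule sum.swap)
  also have "\<dots> = (\<Sum>r\<in>A. \<Sum>r'\<in>B r. \<Sum>q\<in>S. f q * F q r r')" by (rule sum.cong[OF refl], rule sum.swap)
  finally show ?thesis .
qed

lemma lc_split: "(\<Sum>q\<in>S. g q * (a * X q + b * (2 * Y q))) = a * (\<Sum>q\<in>S. g q * X q) + 2 * b * (\<Sum>q\<in>S. g q * Y q)"
  for g X Y :: "'a \<Rightarrow> complex"
  by (simp add: sum.distrib sum_distrib_left algebra_simps)

lemma part2: assumes L: "even L" "L > 0"
  shows "commutator (Hx L D J h Delta) (Px L D) (Omega L D) = (\<lambda>\<sigma>. 2 * complex_of_real h * Px L D (Omega L D) \<sigma>)"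
proof (rule ext)
  fix \<sigma>
  let ?S = "sites L D"
  let ?N = "\<lambda>r. {r'\<in>sites L D. adjacent L D r r'}"
  let ?O = "eb (om L D)"
  let ?g = "\<lambda>r r'. 2 * eb ((om L D)(r':=0, r:=0)) \<sigma>"
  let ?cJ = "complex_of_real J * (1/2)"
  let ?ch = "complex_of_real h"
  have lH: "lin (Hx L D J h Delta)" using good_H[OF L] by (simp add: good_def)
  have s1: "commutator (Hx L D J h Delta) (Px L D) ?O \<sigma> = (\<Sum>q\<in>?S. sg q * commutator (Hx L D J h Delta) (Pq L D q) ?O \<sigma>)"
    by (simp only: Px_eq comm_sum_right[OF lH])
  have w: "W L D r r' ?O \<sigma> = ?g r r' \<and> W L D r' r ?O \<sigma> = ?g r r'" if "r \<in> ?S" "r' \<in> ?N r" for r r'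
  proof -
    have ne: "r \<noteq> r'" using that adjacent_ne[OF L] by auto
    have "(om L D)(r:=0, r':=0) = (om L D)(r':=0, r:=0)" using ne by (rule fun_upd_twist)
    then show ?thesis using W_Om[OF that(1) _ ne] W_Om[of r' L D r] that ne by auto
  qed
  have s2: "commutator (Hx L D J h Delta) (Pq L D q) ?O \<sigma> =
     ?cJ * (\<Sum>r\<in>?S. \<Sum>r'\<in>?N r. (if q = r then ?g r r' else 0) + (if q = r' then ?g r r' else 0))
     + ?ch * (2 * Pq L D q ?O \<sigma>)" if q: "q \<in> ?S" for q
  proof -
    have "commutator (Hx L D J h Delta) (Pq L D q) ?O \<sigma> =
      ?cJ * commutator (XY L D) (Pq L D q) ?O \<sigma> + ?ch * commutator (ZZ L D) (Pq L D q) ?O \<sigma>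
      + complex_of_real Delta * commutator (ZZ2 L D) (Pq L D q) ?O \<sigma>"
      unfolding Hx_eq comm_lc3_left[OF lin_Pq] ..
    also have "\<dots> = ?cJ * (\<Sum>r\<in>?S. \<Sum>r'\<in>?N r. (if q = r then ?g r r' else 0) + (if q = r' then ?g r r' else 0))
     + ?ch * (2 * Pq L D q ?O \<sigma>)"
    proof -
      have "(\<Sum>r\<in>?S. \<Sum>r'\<in>?N r. (if q = r then W L D r r' ?O \<sigma> else 0) + (if q = r' then W L D r' r ?O \<sigma> else 0))
         = (\<Sum>r\<in>?S. \<Sum>r'\<in>?N r. (if q = r then ?g r r' else 0) + (if q = r' then ?g r r' else 0))"
        by (intro sum.cong refl) (use w in auto)
      then show ?thesis unfolding cXY[OF L q] cZZ[OF q] cZZ2[OF q] by simp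
    qed
    finally show ?thesis .
  qed
  have s4: "(\<Sum>q\<in>?S. sg q * (\<Sum>r\<in>?S. \<Sum>r'\<in>?N r. (if q = r then ?g r r' else 0) + (if q = r' then ?g r r' else 0))) = 0"
  proof -
    have "(\<Sum>q\<in>?S. sg q * (\<Sum>r\<in>?S. \<Sum>r'\<in>?N r. (if q = r then ?g r r' else 0) + (if q = r' then ?g r r' else 0)))
      = (\<Sum>r\<in>?S. \<Sum>r'\<in>?N r. \<Sum>q\<in>?S. sg q * ((if q = r then ?g r r' else 0) + (if q = r' then ?g r r' else 0)))"
      by (rule swap3)
    also have "\<dots> = (\<Sum>r\<in>?S. \<Sum>r'\<in>?N r. 0)"
    proof (intro sum.cong refl)
      fix r r' assume r: "r \<in> ?S" and r': "r' \<in> ?N r"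
      have e: "\<And>q. sg q * ((if q = r then ?g r r' else 0) + (if q = r' then ?g r r' else 0))
          = (if q = r then sg r * ?g r r' else 0) + (if q = r' then sg r' * ?g r r' else 0)" by simp
      have "sg r' = - sg r" using adj_sg[OF L(1) r] r' by auto
      then show "(\<Sum>q\<in>?S. sg q * ((if q = r then ?g r r' else 0) + (if q = r' then ?g r r' else 0))) = 0"
        using r r' by (simp only: e sum.distrib sum.delta finite_sites) simp
    qed
    also have "\<dots> = 0" by simp
    finally show ?thesis .
  qed
  have "commutator (Hx L D J h Delta) (Px L D) ?O \<sigma> =
     (\<Sum>q\<in>?S. sg q * (?cJ * (\<Sum>r\<in>?S. \<Sum>r'\<in>?N r. (if q = r then ?g r r' else 0) + (if q = r' then ?g r r' else 0))
     + ?ch * (2 * Pq L D q ?O \<sigma>)))"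
    unfolding s1 by (intro sum.cong refl) (simp add: s2)
  also have "\<dots> = 2 * ?ch * (\<Sum>q\<in>?S. sg q * Pq L D q ?O \<sigma>)"
    unfolding lc_split s4 by simp
  also have "\<dots> = 2 * ?ch * Px L D ?O \<sigma>" by (simp add: Px_eq)
  finally show "commutator (Hx L D J h Delta) (Px L D) (Omega L D) \<sigma> = 2 * complex_of_real h * Px L D (Omega L D) \<sigma>"
    by (simp add: Omega_eq)
qed



theorem mainTheorem7:
  fixes L D :: nat and J h Delta :: real
  assumes "even L" and "L > 0"
  shows "(Hx L D J h Delta (Omega L D)
           = (\<lambda>\<sigma>. complex_of_real ((Delta - h) * real L ^ D) * Omega L D \<sigma>)) \<and>
     (commutator (Hx L D J h Delta) (Px L D) (Omega L D)
           = (\<lambda>\<sigma>. 2 * complex_of_real h * Px L D (Omega L D) \<sigma>)) \<and>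
     (commutator (commutator (Hx L D J h Delta) (Px L D)) (Px L D) = (\<lambda>\<psi> \<sigma>. 0)) \<and>
     (\<forall>n::nat. Hx L D J h Delta ((Px L D ^^ n) (Omega L D))
           = (\<lambda>\<sigma>. complex_of_real (h * (2 * real n - real L ^ D) + Delta * real L ^ D)
                    * (Px L D ^^ n) (Omega L D) \<sigma>))"
proof -
  let ?H = "Hx L D J h Delta" and ?P = "Px L D" and ?O = "Omega L D"
  let ?C = "commutator ?H ?P"
  have p1: "?H ?O = (\<lambda>\<sigma>. complex_of_real ((Delta - h) * real L ^ D) * ?O \<sigma>)" by (rule part1[OF assms])
  have p2: "?C ?O = (\<lambda>\<sigma>. 2 * complex_of_real h * ?P ?O \<sigma>)" by (rule part2[OF assms])
  have p3: "commutator ?C ?P = (\<lambda>\<psi> \<sigma>. 0)" by (rule dc_zero[OF good_H[OF assms]])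
  have lP: "lin ?P" by (rule lin_Px)
  have CP: "?C (?P \<psi>) = ?P (?C \<psi>)" for \<psi>
  proof (rule ext)
    fix \<sigma>
    have "commutator ?C ?P \<psi> \<sigma> = 0" using p3 by simp
    then show "?C (?P \<psi>) \<sigma> = ?P (?C \<psi>) \<sigma>" by (simp add: commutator_def[of ?C ?P])
  qed
  have CA: "?C ((?P ^^ n) ?O) = (\<lambda>\<sigma>. 2 * complex_of_real h * (?P ^^ Suc n) ?O \<sigma>)" for n
  proof (induction n)
    case 0 then show ?case using p2 by simp
  next
    case (Suc n)
    have "?C ((?P ^^ Suc n) ?O) = ?P (?C ((?P ^^ n) ?O))" using CP by simp
    also have "\<dots> = (\<lambda>\<sigma>. 2 * complex_of_real h * (?P ^^ Suc (Suc n)) ?O \<sigma>)"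
      unfolding Suc lin_scale[OF lP] by simp
    finally show ?case .
  qed
  have HP: "?H (?P \<psi>) = (\<lambda>\<sigma>. ?P (?H \<psi>) \<sigma> + ?C \<psi> \<sigma>)" for \<psi>
    by (simp add: commutator_def fun_eq_iff)
  have p4: "?H ((?P ^^ n) ?O) = (\<lambda>\<sigma>. complex_of_real (h * (2 * real n - real L ^ D) + Delta * real L ^ D)
                    * (?P ^^ n) ?O \<sigma>)" for n
  proof (induction n)
    case 0 then show ?case using p1 by (simp add: algebra_simps)
  next
    case (Suc n)
    have "?H ((?P ^^ Suc n) ?O) = (\<lambda>\<sigma>. ?P (?H ((?P ^^ n) ?O)) \<sigma> + ?C ((?P ^^ n) ?O) \<sigma>)"
      using HP by simp
    also have "\<dots> = (\<lambda>\<sigma>. complex_of_real (h * (2 * real n - real L ^ D) + Delta * real L ^ D) * (?P ^^ Suc n) ?O \<sigma>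
        + 2 * complex_of_real h * (?P ^^ Suc n) ?O \<sigma>)"
      unfolding Suc CA lin_scale[OF lP] by simp
    also have "\<dots> = (\<lambda>\<sigma>. complex_of_real (h * (2 * real (Suc n) - real L ^ D) + Delta * real L ^ D) * (?P ^^ Suc n) ?O \<sigma>)"
      by (simp add: fun_eq_iff algebra_simps)
    finally show ?case .
  qed
  show ?thesis using p1 p2 p3 p4 by blast
qed

end
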